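(* Suppose $\{\mathcal{G}_k\}$ is uniformly jointly strongly connected with constant $B\ge1$, and consider an algorithm in $\mathcal{A}_{\rm ave}$. (i) If $\alpha_k\ge\alpha_{k+1}$ for all $k$ and $\sum_{k=0}^\infty\alpha_k^{(n-1)B}=\infty$, then global asymptotic consensus is achieved. (ii) If $\alpha_k+\eta_k\le\alpha_{k+1}+\eta_{k+1}$ for all $k$ and $\sum_{k=0}^\infty(1-\alpha_k-\eta_k)^{(n-1)B}=\infty$, then global asymptotic consensus is achieved.
   Context: Network of nodes $\mathcal{V}=\{1,\dots,n\}$, $n\ge 3$, discrete time, states $x_i(k)\in\mathbb{R}$. At each time $k$ a digraph $\mathcal{G}_k=(\mathcal{V},\mathcal{E}_k)$ is given; $j$ is a neighbor of $i$ at time $k$ if $(j,i)\in\mathcal{E}_k$, every node is always its own neighbor; $\mathcal{N}_i(k)$ is the neighbor set. The algorithm is $$x_i(k+1)=\eta_k x_i(k)+\alpha_k\min_{j\in\mathcal{N}_i(k)}x_j(k)+(1-\eta_k-\alpha_k)\max_{j\in\mathcal{N}_i(k)}x_j(k),$$ with node-independent parameters; $\mathcal{A}_{\rm ave}$ consists of those with $\eta_k\in(0,1]$, $\alpha_k\in[0,1-\eta_k]$ for all $k$. Global asymptotic consensus: for every initial time $k_0\ge0$ and initial value $x(k_0)=x^0\in\mathbb{R}^n$ there is $z_*$ with $x_i(k)\to z_*$ for all $i$. A digraph is strongly connected if every node is reachable from every other node by a directed path. $\mathcal{G}([k_1,k_2])=(\mathcal{V},\cup_{k\in[k_1,k_2]}\mathcal{E}_k)$.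 $\{\mathcal{G}_k\}$ is uniformly jointly strongly connected if there is an integer $B\ge1$ with $\mathcal{G}([k,k+B-1])$ strongly connected for all $k\ge0$. *)

theory Defs
  imports "HOL-Analysis.Analysis"
begin

text \<open>Nodes are 0,...,n-1. E k is the edge set of G_k; (j,i) in E k means j is a neighbor of i
  at time k. Every node is always its own neighbor.\<close>

definition nbrs :: "nat \<Rightarrow> (nat \<Rightarrow> (nat \<times> nat) set) \<Rightarrow> nat \<Rightarrow> nat \<Rightarrow> nat set" where
  "nbrs n E k i = {j. j < n \<and> (j, i) \<in> E k} \<union> {i}"

definition step :: "nat \<Rightarrow> (nat \<Rightarrow> (nat \<times> nat) set) \<Rightarrow> (nat \<Rightarrow> real) \<Rightarrow> (nat \<Rightarrow> real)
    \<Rightarrow> nat \<Rightarrow> (nat \<Rightarrow> real) \<Rightarrow> (nat \<Rightarrow> real)" where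
  "step n E eta alpha k x = (\<lambda>i.
     eta k * x i
     + alpha k * Min (x ` nbrs n E k i)
     + (1 - eta k - alpha k) * Max (x ` nbrs n E k i))"

text \<open>Trajectory started at time k0 from x0: traj ... k0 x0 m = x(k0 + m).\<close>
fun traj :: "nat \<Rightarrow> (nat \<Rightarrow> (nat \<times> nat) set) \<Rightarrow> (nat \<Rightarrow> real) \<Rightarrow> (nat \<Rightarrow> real)
    \<Rightarrow> nat \<Rightarrow> (nat \<Rightarrow> real) \<Rightarrow> nat \<Rightarrow> (nat \<Rightarrow> real)" where
  "traj n E eta alpha k0 x0 0 = x0"
| "traj n E eta alpha k0 x0 (Suc m) = step n E eta alpha (k0 + m) (traj n E eta alpha k0 x0 m)"

definition in_A_ave :: "(nat \<Rightarrow> real) \<Rightarrow> (nat \<Rightarrow> real) \<Rightarrow> bool" where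
  "in_A_ave eta alpha \<longleftrightarrow> (\<forall>k. 0 < eta k \<and> eta k \<le> 1 \<and> 0 \<le> alpha k \<and> alpha k \<le> 1 - eta k)"

definition global_consensus :: "nat \<Rightarrow> (nat \<Rightarrow> (nat \<times> nat) set) \<Rightarrow> (nat \<Rightarrow> real) \<Rightarrow> (nat \<Rightarrow> real) \<Rightarrow> bool" where
  "global_consensus n E eta alpha \<longleftrightarrow>
     (\<forall>k0 x0. \<exists>z. \<forall>i<n. (\<lambda>m. traj n E eta alpha k0 x0 m i) \<longlonglongrightarrow> z)"

definition strongly_connected :: "nat \<Rightarrow> (nat \<times> nat) set \<Rightarrow> bool" where
  "strongly_connected n A \<longleftrightarrow>
     (\<forall>i<n. \<forall>j<n. (i, j) \<in> (A \<inter> ({..<n} \<times> {..<n}))\<^sup>*)"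

definition union_graph :: "(nat \<Rightarrow> (nat \<times> nat) set) \<Rightarrow> nat \<Rightarrow> nat \<Rightarrow> (nat \<times> nat) set" where
  "union_graph E k1 k2 = (\<Union>k\<in>{k1..k2}. E k)"

definition UJSC :: "nat \<Rightarrow> (nat \<Rightarrow> (nat \<times> nat) set) \<Rightarrow> nat \<Rightarrow> bool" where
  "UJSC n E B \<longleftrightarrow> B \<ge> 1 \<and> (\<forall>k. strongly_connected n (union_graph E k (k + B - 1)))"

end

theory Submission
  imports Defs
begin

lemma nbrs_facts:
  assumes "i < n"
  shows "finite (nbrs n E k i)" "i \<in> nbrs n E k i" "nbrs n E k i \<subseteq> {..<n}"
  using assms unfolding nbrs_def by auto

lemma step_gap:
  assumes A: "in_A_ave eta alpha" and i: "i < n" and j: "j \<in> nbrs n E k i"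
    and U: "\<And>l. l < n \<Longrightarrow> y l \<le> U"
  shows "alpha k * (U - y j) \<le> U - step n E eta alpha k y i"
proof -
  have fin: "finite (y ` nbrs n E k i)" and ne: "y ` nbrs n E k i \<noteq> {}"
    using nbrs_facts(1,2)[OF i, of E k] by auto
  have jn: "j < n" using j nbrs_facts(3)[OF i] by auto
  have mn: "Min (y ` nbrs n E k i) \<le> y j" using fin j by (simp add: Min_le)
  have mx: "Max (y ` nbrs n E k i) \<le> U" using fin ne U nbrs_facts(3)[OF i] by (auto simp: Max_le_iff)
  have yi: "y i \<le> U" using U i by auto
  have p: "0 < eta k" "eta k \<le> 1" "0 \<le> alpha k" "alpha k \<le> 1 - eta k" using A unfolding in_A_ave_def by auto
  have e1: "0 \<le> eta k * (U - y i)" using p yi by simp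
  have e2: "alpha k * (U - y j) \<le> alpha k * (U - Min (y ` nbrs n E k i))"
    using p mn by (intro mult_left_mono) auto
  have e3: "0 \<le> (1 - eta k - alpha k) * (U - Max (y ` nbrs n E k i))" using p mx by simp
  have "U - step n E eta alpha k y i = eta k * (U - y i) + alpha k * (U - Min (y ` nbrs n E k i))
     + (1 - eta k - alpha k) * (U - Max (y ` nbrs n E k i))"
    unfolding step_def by (simp add: algebra_simps)
  thus ?thesis using e1 e2 e3 by linarith
qed

lemma step_range:
  assumes A: "in_A_ave eta alpha" and i: "i < n"
    and U: "\<And>l. l < n \<Longrightarrow> lo \<le> y l \<and> y l \<le> hi"
  shows "lo \<le> step n E eta alpha k y i \<and> step n E eta alpha k y i \<le> hi"
proof -
  have fin: "finite (y ` nbrs n E k i)" and ne: "y ` nbrs n E k i \<noteq> {}"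
    using nbrs_facts(1,2)[OF i, of E k] by auto
  have sub: "nbrs n E k i \<subseteq> {..<n}" using nbrs_facts(3)[OF i] by auto
  have mx: "Max (y ` nbrs n E k i) \<le> hi" "lo \<le> Max (y ` nbrs n E k i)"
    using fin ne U sub by (auto simp: Max_le_iff Max_ge_iff)
  have mn: "Min (y ` nbrs n E k i) \<le> hi" "lo \<le> Min (y ` nbrs n E k i)"
    using fin ne U sub by (auto simp: Min_le_iff Min_ge_iff)
  have yi: "lo \<le> y i" "y i \<le> hi" using U i by auto
  have p: "0 < eta k" "eta k \<le> 1" "0 \<le> alpha k" "alpha k \<le> 1 - eta k" using A unfolding in_A_ave_def by auto
  define a where "a = Min (y ` nbrs n E k i)"
  define b where "b = Max (y ` nbrs n E k i)"
  have s: "step n E eta alpha k y i = eta k * y i + alpha k * a + (1 - eta k - alpha k) * b"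
    unfolding step_def a_def b_def by simp
  have "eta k * lo \<le> eta k * y i" "eta k * y i \<le> eta k * hi"
    using p yi by (auto intro: mult_left_mono)
  moreover have "alpha k * lo \<le> alpha k * a" "alpha k * a \<le> alpha k * hi"
    using p mn unfolding a_def by (auto intro: mult_left_mono)
  moreover have "(1 - eta k - alpha k) * lo \<le> (1 - eta k - alpha k) * b"
     "(1 - eta k - alpha k) * b \<le> (1 - eta k - alpha k) * hi"
    using p mx unfolding b_def by (auto intro: mult_left_mono)
  ultimately show ?thesis unfolding s by (simp add: algebra_simps)
qed

lemma path_edge:
  assumes "(a, b) \<in> R\<^sup>*" "a \<in> S" "b \<notin> S"
  shows "\<exists>u v. (u, v) \<in> R \<and> u \<in> S \<and> v \<notin> S"
  using assms by (induction rule: rtrancl_induct) auto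

context
  fixes n B :: nat and E :: "nat \<Rightarrow> (nat \<times> nat) set" and eta alpha :: "nat \<Rightarrow> real"
    and k0 :: nat and x0 :: "nat \<Rightarrow> real"
  assumes n3: "n \<ge> 3" and UJ: "UJSC n E B" and A: "in_A_ave eta alpha"
begin

definition "Mx m = Max (traj n E eta alpha k0 x0 m ` {..<n})"
definition "mx m = Min (traj n E eta alpha k0 x0 m ` {..<n})"

lemma fin_ne: "finite (traj n E eta alpha k0 x0 m ` {..<n})" "traj n E eta alpha k0 x0 m ` {..<n} \<noteq> {}"
proof -
  show "finite (traj n E eta alpha k0 x0 m ` {..<n})" by simp
  have "0 \<in> {..<n}" using n3 by simp
  thus "traj n E eta alpha k0 x0 m ` {..<n} \<noteq> {}" by blast
qed

lemma bnds: "i < n \<Longrightarrow> mx m \<le> traj n E eta alpha k0 x0 m i \<and> traj n E eta alpha k0 x0 m i \<le> Mx m"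
  unfolding Mx_def mx_def using fin_ne by auto

lemma bnds_Suc: "i < n \<Longrightarrow> mx m \<le> traj n E eta alpha k0 x0 (Suc m) i \<and> traj n E eta alpha k0 x0 (Suc m) i \<le> Mx m"
  using step_range[OF A, where i=i and n=n and y="traj n E eta alpha k0 x0 m" and lo="mx m" and hi="Mx m" and E=E and k="k0 + m"] bnds by simp

lemma Mx_Suc: "Mx (Suc m) \<le> Mx m"
  unfolding Mx_def[of "Suc m"] using fin_ne bnds_Suc by (auto simp: Max_le_iff)

lemma mx_Suc: "mx m \<le> mx (Suc m)"
  unfolding mx_def[of "Suc m"] using fin_ne bnds_Suc by (auto simp: Min_ge_iff)

lemma Mx_dec: "decseq Mx" by (rule decseq_SucI) (rule Mx_Suc)
lemma mx_inc: "incseq mx" by (rule incseq_SucI) (rule mx_Suc)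

lemma gapX:
  assumes i: "i < n" and j: "j \<in> nbrs n E (k0 + m) i" and U: "Mx m \<le> U"
  shows "alpha (k0 + m) * (U - traj n E eta alpha k0 x0 m j) \<le> U - traj n E eta alpha k0 x0 (Suc m) i"
proof -
  have "\<And>l. l < n \<Longrightarrow> traj n E eta alpha k0 x0 m l \<le> U" using bnds U by (meson order_trans)
  from step_gap[OF A i j, where y="traj n E eta alpha k0 x0 m" and U=U, OF this] show ?thesis by simp
qed

lemma block:
  assumes mono: "\<And>k. alpha (Suc k) \<le> alpha k"
  shows "Mx (s + (n-1)*B) - mx (s + (n-1)*B) \<le> (Mx s - mx s) - alpha (k0 + s + (n-1)*B) ^ ((n-1)*B) * (Mx s - mx s)"
proof -
  define L where "L = (n-1)*B"
  define a where "a = alpha (k0+s+L)"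
  define U where "U = Mx s"
  define D where "D = Mx s - mx s"
  define P where "P r = {i. i < n \<and> a^r * D \<le> U - traj n E eta alpha k0 x0 (s+r) i}" for r
  have B1: "B \<ge> 1" and SC: "\<And>k. strongly_connected n (union_graph E k (k + B - 1))"
    using UJ unfolding UJSC_def by auto
  have amono: "a \<le> alpha k" if "k \<le> k0+s+L" for k
    unfolding a_def using lift_Suc_antimono_le[of alpha, OF mono that] .
  have a0: "0 \<le> a" using A unfolding in_A_ave_def a_def by auto
  have D0: "0 \<le> D" unfolding D_def using bnds[of 0 s] n3 by auto
  have Ub: "traj n E eta alpha k0 x0 (s+r) i \<le> U" if "i < n" for r i
  proof -
    have "Mx (s+r) \<le> Mx s" using decseqD[OF Mx_dec] by simp
    thus ?thesis using bnds[OF that, of "s+r"] unfolding U_def by linarith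
  qed
  have step1: "i \<in> P (Suc r)" if r: "r < L" and j: "j \<in> nbrs n E (k0+s+r) i" and i: "i < n" and jP: "j \<in> P r" for r i j
  proof -
    have jn: "j < n" using jP unfolding P_def by auto
    have g: "alpha (k0 + (s+r)) * (U - traj n E eta alpha k0 x0 (s+r) j) \<le> U - traj n E eta alpha k0 x0 (Suc (s+r)) i"
      using gapX[OF i, of j "s+r" U] j decseqD[OF Mx_dec, of s "s+r"] unfolding U_def by (simp add: add.assoc)
    have h1: "a * (a^r * D) \<le> a * (U - traj n E eta alpha k0 x0 (s+r) j)"
      using jP a0 unfolding P_def by (auto intro: mult_left_mono)
    have h2: "a * (U - traj n E eta alpha k0 x0 (s+r) j) \<le> alpha (k0 + (s+r)) * (U - traj n E eta alpha k0 x0 (s+r) j)"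
      using amono[of "k0+(s+r)"] r Ub[OF jn, of r] by (intro mult_right_mono) auto
    show ?thesis using g h1 h2 i unfolding P_def by simp
  qed
  have Pself: "i \<in> P (Suc r)" if "r < L" "i \<in> P r" for r i
    using step1[OF that(1) nbrs_facts(2) _ that(2)] that(2) unfolding P_def by auto
  have Pedge: "i \<in> P (Suc r)" if "r < L" "j \<in> P r" "i < n" "(j,i) \<in> E (k0+s+r)" for r i j
    using step1[OF that(1) _ that(3) that(2)] that unfolding P_def nbrs_def by auto
  have Pmono: "P r \<subseteq> P r'" if "r \<le> r'" "r' \<le> L" for r r'
    using that
  proof (induction r')
    case 0 thus ?case by simp
  next
    case (Suc r')
    show ?case
    proof (cases "r = Suc r'")
      case True thus ?thesis by simp
    next
      case False
      hence "P r \<subseteq> P r'" using Suc by simp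
      thus ?thesis using Pself Suc.prems by auto
    qed
  qed
  have Psub: "P r \<subseteq> {..<n}" for r unfolding P_def by auto
  have grow: "card (P r) < card (P (r+B))" if rB: "r + B \<le> L" and ne: "P r \<noteq> {}" and nf: "P r \<noteq> {..<n}" for r
  proof -
    obtain j where j: "j \<in> P r" using ne by auto
    obtain i where i: "i < n" "i \<notin> P r" using nf Psub by auto
    have jn: "j < n" using j Psub by auto
    define R where "R = union_graph E (k0+s+r) (k0+s+r + B - 1) \<inter> ({..<n} \<times> {..<n})"
    have "(j, i) \<in> R\<^sup>*" using SC[of "k0+s+r"] jn i unfolding strongly_connected_def R_def by auto
    then obtain u v where uv: "(u,v) \<in> R" "u \<in> P r" "v \<notin> P r" using path_edge[of j i R "P r"] j i by auto
    then obtain kk where kk: "kk \<in> {k0+s+r .. k0+s+r+B-1}" "(u,v) \<in> E kk" "v < n"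
      unfolding R_def union_graph_def by auto
    define q where "q = kk - k0 - s"
    have q: "r \<le> q" "Suc q \<le> r + B" "q < L" "kk = k0 + s + q" using kk B1 rB unfolding q_def by auto
    have "u \<in> P q" using Pmono[of r q] q uv by auto
    hence "v \<in> P (Suc q)" using Pedge[of q u v] q kk by auto
    hence "v \<in> P (r+B)" using Pmono[of "Suc q" "r+B"] q rB by auto
    moreover have "P r \<subseteq> P (r+B)" using Pmono[of r "r+B"] rB by auto
    ultimately have "P r \<subset> P (r+B)" using uv by auto
    moreover have "finite (P (r+B))" using Psub finite_subset by blast
    ultimately show ?thesis by (simp add: psubset_card_mono)
  qed
  have cardP: "t + 1 \<le> card (P (t*B))" if "t \<le> n-1" for t
    using that
  proof (induction t)
    case 0
    have "mx s \<in> traj n E eta alpha k0 x0 s ` {..<n}" unfolding mx_def using fin_ne by (rule Min_in)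
    then obtain i0 where "i0 < n" "traj n E eta alpha k0 x0 s i0 = mx s" by auto
    hence "i0 \<in> P 0" unfolding P_def D_def U_def by simp
    moreover have "finite (P 0)" using Psub finite_subset by blast
    ultimately have "0 < card (P 0)" using card_gt_0_iff by blast
    thus ?case by simp
  next
    case (Suc t)
    have IH: "t + 1 \<le> card (P (t*B))" using Suc by simp
    have le: "t*B + B \<le> L" unfolding L_def using Suc.prems mult_le_mono1[of "Suc t" "n-1" B] by simp
    show ?case
    proof (cases "P (t*B) = {..<n}")
      case True
      hence "P (Suc t * B) = {..<n}" using Pmono[of "t*B" "t*B+B"] le Psub[of "Suc t * B"] by (auto simp: add.commute)
      thus ?thesis using Suc.prems by simp
    next
      case False
      have "P (t*B) \<noteq> {}" using IH by auto
      hence "card (P (t*B)) < card (P (t*B + B))" using grow[OF le _ False] by simp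
      thus ?thesis using IH by (simp add: add.commute)
    qed
  qed
  have "n \<le> card (P L)" using cardP[of "n-1"] n3 unfolding L_def by simp
  hence PL: "P L = {..<n}" using Psub[of L] by (intro card_seteq) auto
  have allb: "traj n E eta alpha k0 x0 (s+L) i \<le> U - a^L * D" if "i < n" for i
  proof -
    have "i \<in> P L" using PL that by simp
    thus ?thesis unfolding P_def by simp
  qed
  have "Mx (s+L) \<le> U - a^L * D"
    unfolding Mx_def using fin_ne[of "s+L"] allb by (subst Max_le_iff) auto
  moreover have "mx s \<le> mx (s+L)" using incseqD[OF mx_inc] by simp
  ultimately show ?thesis unfolding L_def[symmetric] a_def[symmetric] U_def D_def by simp
qed

lemma conv:
  assumes mono: "\<And>k. alpha (Suc k) \<le> alpha k" and ns: "\<not> summable (\<lambda>k. alpha k ^ ((n-1)*B))"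
  shows "\<exists>z. \<forall>i<n. (\<lambda>m. traj n E eta alpha k0 x0 m i) \<longlonglongrightarrow> z"
proof -
  define L where "L = (n-1)*B"
  have B1: "B \<ge> 1" using UJ unfolding UJSC_def by auto
  have n1: "1 \<le> n - 1" using n3 by simp
  have L1: "L \<ge> 1" unfolding L_def using mult_le_mono[OF n1 B1] by simp
  define Dd where "Dd m = Mx m - mx m" for m
  have Ddnn: "0 \<le> Dd m" for m unfolding Dd_def using bnds[of 0 m] n3 by auto
  have Dddec: "decseq Dd" unfolding Dd_def by (rule decseq_SucI) (use Mx_Suc mx_Suc in \<open>smt (verit)\<close>)
  obtain d where d: "Dd \<longlonglongrightarrow> d" "\<forall>i. d \<le> Dd i" using decseq_convergent[OF Dddec, of 0] Ddnn by blast
  have dnn: "0 \<le> d" using LIMSEQ_le_const[OF d(1), of 0] Ddnn by auto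
  have d0: "d = 0"
  proof (rule ccontr)
    assume "d \<noteq> 0"
    hence dpos: "d > 0" using dnn by simp
    define f where "f k = alpha (k0+k) ^ L" for k
    have a0: "0 \<le> alpha k" for k using A unfolding in_A_ave_def by auto
    have fnn: "0 \<le> f k" for k unfolding f_def using a0 by simp
    have fdec: "f (Suc k) \<le> f k" for k unfolding f_def using mono[of "k0+k"] a0[of "Suc (k0+k)"] by (simp add: power_mono)
    have fle: "f k' \<le> f k" if "k \<le> k'" for k k' using lift_Suc_antimono_le[of f, OF fdec that] .
    have blk: "Dd ((Suc j)*L) \<le> Dd (j*L) - f((Suc j)*L) * d" for j
    proof -
      have b: "Dd (j*L + L) \<le> Dd (j*L) - alpha (k0 + j*L + L) ^ L * Dd (j*L)"
        using block[OF mono, of "j*L"] unfolding Dd_def L_def by simp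
      have "f((Suc j)*L) * d \<le> f((Suc j)*L) * Dd (j*L)" using d(2) fnn by (intro mult_left_mono) auto
      moreover have "f((Suc j)*L) = alpha (k0 + j*L + L) ^ L" unfolding f_def by (simp add: ac_simps)
      ultimately show ?thesis using b by (simp add: add.commute)
    qed
    have sumb: "Dd (t*L) + d * (\<Sum>j<t. f((Suc j)*L)) \<le> Dd 0" for t
    proof (induction t)
      case 0 thus ?case by simp
    next
      case (Suc t)
      have "Dd (Suc t*L) + d * (\<Sum>j<Suc t. f((Suc j)*L)) = Dd (Suc t*L) + f (Suc t*L) * d + d * (\<Sum>j<t. f((Suc j)*L))"
        by (simp add: algebra_simps)
      also have "\<dots> \<le> Dd (t*L) + d * (\<Sum>j<t. f((Suc j)*L))" using blk[of t] by simp
      finally show ?case using Suc.IH by simp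
    qed
    have sb: "(\<Sum>j<t. f((Suc j)*L)) \<le> Dd 0 / d" for t
    proof -
      have "d * (\<Sum>j<t. f((Suc j)*L)) \<le> Dd 0" using sumb[of t] Ddnn[of "t*L"] by simp
      thus ?thesis using dpos by (simp add: pos_le_divide_eq mult.commute)
    qed
    have part: "(\<Sum>k<N. f k) \<le> real L * (f 0 + Dd 0 / d)" for N
    proof -
      have "(\<Sum>k<N. f k) \<le> (\<Sum>k<N*L. f k)"
        using L1 fnn by (intro sum_mono2) auto
      also have "\<dots> = (\<Sum>m<N. \<Sum>k\<in>{m*L..<m*L+L}. f k)" by (rule sum.nat_group[symmetric])
      also have "\<dots> \<le> (\<Sum>m<N. \<Sum>k\<in>{m*L..<m*L+L}. f (m*L))"
        by (intro sum_mono) (auto intro: fle)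
      also have "\<dots> = real L * (\<Sum>m<N. f (m*L))" by (simp add: sum_distrib_left)
      also have "\<dots> \<le> real L * (\<Sum>m<Suc N. f (m*L))" using fnn by (intro mult_left_mono) auto
      also have "\<dots> = real L * (f 0 + (\<Sum>m<N. f (Suc m*L)))" by (simp only: sum.lessThan_Suc_shift) simp
      also have "\<dots> \<le> real L * (f 0 + Dd 0 / d)" using sb[of N] by (intro mult_left_mono) auto
      finally show ?thesis .
    qed
    have "summable f" using fnn part by (intro summableI_nonneg_bounded)
    hence "summable (\<lambda>k. alpha (k + k0) ^ L)" unfolding f_def by (simp add: add.commute)
    hence "summable (\<lambda>k. alpha k ^ L)" by (rule summable_iff_shift[THEN iffD1])
    thus False using ns unfolding L_def by simp
  qed
  have Mxlb: "mx 0 \<le> Mx m" for m using bnds[of 0 m] incseqD[OF mx_inc, of 0 m] n3 by auto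
  obtain z where z: "Mx \<longlonglongrightarrow> z" using decseq_convergent[OF Mx_dec, of "mx 0"] Mxlb by blast
  have "(\<lambda>m. Mx m - Dd m) \<longlonglongrightarrow> z - 0" using z d d0 by (intro tendsto_diff) auto
  hence mz: "mx \<longlonglongrightarrow> z" unfolding Dd_def by simp
  have "(\<lambda>m. traj n E eta alpha k0 x0 m i) \<longlonglongrightarrow> z" if "i < n" for i
    using bnds[OF that] by (intro tendsto_sandwich[OF _ _ mz z]) (auto intro: always_eventually)
  thus ?thesis by blast
qed

end

lemma consensus_i:
  assumes "n \<ge> 3" "UJSC n E B" "in_A_ave eta alpha" "\<And>k. alpha (Suc k) \<le> alpha k"
    "\<not> summable (\<lambda>k. alpha k ^ ((n-1)*B))"
  shows "global_consensus n E eta alpha"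
  unfolding global_consensus_def using conv[OF assms(1-3) assms(4,5)] by blast

lemma traj_neg:
  "traj n E eta (\<lambda>k. 1 - eta k - alpha k) k0 (\<lambda>i. - x0 i) m = (\<lambda>i. - traj n E eta alpha k0 x0 m i)"
proof (induction m)
  case 0 thus ?case by simp
next
  case (Suc m)
  define X where "X = traj n E eta alpha k0 x0 m"
  show ?case
  proof
    fix i
    define N where "N = nbrs n E (k0+m) i"
    have fin: "finite (X ` N)" and ne: "X ` N \<noteq> {}" unfolding N_def nbrs_def by auto
    have im: "(\<lambda>j. - X j) ` N = uminus ` (X ` N)" by (simp add: image_image)
    have mn: "Min ((\<lambda>j. - X j) ` N) = - Max (X ` N)" unfolding im using minus_Max_eq_Min[OF fin ne] by simp
    have mx: "Max ((\<lambda>j. - X j) ` N) = - Min (X ` N)" unfolding im using minus_Min_eq_Max[OF fin ne] by simp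
    show "traj n E eta (\<lambda>k. 1 - eta k - alpha k) k0 (\<lambda>i. - x0 i) (Suc m) i = - traj n E eta alpha k0 x0 (Suc m) i"
      using Suc.IH mn mx unfolding X_def[symmetric] N_def by (simp add: step_def X_def algebra_simps)
  qed
qed

theorem corollary2:
  fixes n B :: nat and E :: "nat \<Rightarrow> (nat \<times> nat) set" and eta alpha :: "nat \<Rightarrow> real"
  assumes "n \<ge> 3"
    and "UJSC n E B"
    and "in_A_ave eta alpha"
  shows "((\<forall>k. alpha k \<ge> alpha (Suc k)) \<and> \<not> summable (\<lambda>k. alpha k ^ ((n - 1) * B))
            \<longrightarrow> global_consensus n E eta alpha)
       \<and> ((\<forall>k. alpha k + eta k \<le> alpha (Suc k) + eta (Suc k))
            \<and> \<not> summable (\<lambda>k. (1 - alpha k - eta k) ^ ((n - 1) * B))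
            \<longrightarrow> global_consensus n E eta alpha)"
proof (intro conjI impI)
  assume "(\<forall>k. alpha k \<ge> alpha (Suc k)) \<and> \<not> summable (\<lambda>k. alpha k ^ ((n - 1) * B))"
  thus "global_consensus n E eta alpha" using consensus_i[OF assms] by blast
next
  assume h: "(\<forall>k. alpha k + eta k \<le> alpha (Suc k) + eta (Suc k))
            \<and> \<not> summable (\<lambda>k. (1 - alpha k - eta k) ^ ((n - 1) * B))"
  define beta where "beta k = 1 - eta k - alpha k" for k
  have Ab: "in_A_ave eta beta" using assms(3) unfolding in_A_ave_def beta_def by auto
  have mb: "beta (Suc k) \<le> beta k" for k using h unfolding beta_def by (smt (verit))
  have nb: "\<not> summable (\<lambda>k. beta k ^ ((n-1)*B))" using h unfolding beta_def by (simp add: algebra_simps)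
  have gc: "global_consensus n E eta beta" using consensus_i[OF assms(1,2) Ab mb nb] .
  show "global_consensus n E eta alpha"
    unfolding global_consensus_def
  proof (intro allI)
    fix k0 x0
    obtain z where z: "\<forall>i<n. (\<lambda>m. traj n E eta beta k0 (\<lambda>i. - x0 i) m i) \<longlonglongrightarrow> z"
      using gc unfolding global_consensus_def by blast
    have "\<forall>i<n. (\<lambda>m. traj n E eta alpha k0 x0 m i) \<longlonglongrightarrow> - z"
    proof (intro allI impI)
      fix i assume "i < n"
      hence "(\<lambda>m. - (- traj n E eta alpha k0 x0 m i)) \<longlonglongrightarrow> - z"
        using z traj_neg[of n E eta alpha k0 x0] unfolding beta_def by (intro tendsto_minus) simp
      thus "(\<lambda>m. traj n E eta alpha k0 x0 m i) \<longlonglongrightarrow> - z" by simp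
    qed
    thus "\<exists>z. \<forall>i<n. (\<lambda>m. traj n E eta alpha k0 x0 m i) \<longlonglongrightarrow> z" by blast
  qed
qed

end
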